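(* Let $L'>0$ and let $\{|\tilde\psi(l)\rangle\}_{l\in[0,L']}$ be a continuous path of normalized pure states in a finite-dimensional Hilbert space. Assume there is a fixed $d\ge 0$ such that for all $l$ and all $\delta$ with $l,l+\delta\in[0,L']$, $$|\langle\tilde\psi(l)|\tilde\psi(l+\delta)\rangle|^2\ \ge\ 1-d^2\delta^2 .$$ Let $0<p<1$. Then the state $|\tilde\psi(L')\rangle$ can be prepared from $|\tilde\psi(0)\rangle$ with fidelity at least $p$ by $q=\lceil (L')^2d^2/(1-p)\rceil$ intermediate projective-measurement operations: there are points $0<l_1<\dots<l_q=L'$ such that, for any choice of projective-measurement operations $M_{l_j}$ onto $|\tilde\psi(l_j)\rangle$ (i.e. for any choice of the quantum operations $\mathcal E$ in their definition), the state $\rho_{\rm out}=M_{l_q}\circ\cdots\circ M_{l_1}(|\tilde\psi(0)\rangle\langle\tilde\psi(0)|)$ satisfies $\langle\tilde\psi(L')|\rho_{\rm out}|\tilde\psi(L')\rangle\ge p$.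
   Context: For a normalized state $|\tilde\psi(l)\rangle$ let $P_l=|\tilde\psi(l)\rangle\langle\tilde\psi(l)|$. A projective-measurement operation onto $|\tilde\psi(l)\rangle$ is a quantum operation (completely positive trace-preserving map) of the form $M_l(\rho)=P_l\rho P_l+\mathcal E\big((\mathbb 1-P_l)\rho(\mathbb 1-P_l)\big)$, where $\mathcal E$ is an arbitrary quantum operation (which may depend on $l$). *)

theory Defs
  imports "HOL-Analysis.Analysis"
begin

type_synonym 'n cmat = "complex^'n^'n"

definition cadj :: "'n::finite cmat \<Rightarrow> 'n cmat" where
  "cadj A = (\<chi> i j. cnj (A $ j $ i))"

definition braket :: "complex^'n::finite \<Rightarrow> complex^'n \<Rightarrow> complex" where
  "braket x y = (\<Sum>i\<in>UNIV. cnj (x $ i) * y $ i)"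

definition ketbra :: "complex^'n::finite \<Rightarrow> complex^'n \<Rightarrow> 'n cmat" where
  "ketbra x y = (\<chi> i j. x $ i * cnj (y $ j))"

definition quantum_operation :: "('n::finite cmat \<Rightarrow> 'n cmat) \<Rightarrow> bool" where
  "quantum_operation E \<longleftrightarrow>
     (\<exists>(K :: nat \<Rightarrow> 'n cmat) m.
        (\<forall>\<rho>. E \<rho> = (\<Sum>k<m. K k ** \<rho> ** cadj (K k))) \<and>
        (\<Sum>k<m. cadj (K k) ** K k) = mat 1)"

definition proj_meas_op ::
  "complex^'n::finite \<Rightarrow> ('n cmat \<Rightarrow> 'n cmat) \<Rightarrow> 'n cmat \<Rightarrow> 'n cmat" where
  "proj_meas_op \<psi> E \<rho> =
     (let P = ketbra \<psi> \<psi>; Q = mat 1 - P in P ** \<rho> ** P + E (Q ** \<rho> ** Q))"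

fun meas_seq ::
  "(real \<Rightarrow> complex^'n::finite) \<Rightarrow> (nat \<Rightarrow> real) \<Rightarrow> (nat \<Rightarrow> ('n cmat \<Rightarrow> 'n cmat))
     \<Rightarrow> nat \<Rightarrow> 'n cmat" where
  "meas_seq \<psi> l Es 0 = ketbra (\<psi> 0) (\<psi> 0)"
| "meas_seq \<psi> l Es (Suc j) = proj_meas_op (\<psi> (l (Suc j))) (Es (Suc j)) (meas_seq \<psi> l Es j)"

end

theory Submission imports Defs begin

definition psd :: "'n::finite cmat \<Rightarrow> bool" where
  "psd A \<longleftrightarrow> (\<forall>v. 0 \<le> Re (braket v (A *v v)))"

lemma braket_adj: "braket x (A *v y) = braket (cadj A *v x) y"
  unfolding braket_def cadj_def matrix_vector_mult_def
  by (simp add: sum_distrib_left sum_distrib_right sum_divide_distrib mult_ac) (rule sum.swap)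

lemma cadj_cadj[simp]: "cadj (cadj A) = A"
  by (simp add: cadj_def vec_eq_iff)

lemma ketbra_mv: "ketbra a b *v w = braket b w *s a"
  unfolding ketbra_def braket_def matrix_vector_mult_def
  by (simp add: vec_eq_iff sum_distrib_left mult_ac)

lemma cadj_ketbra: "cadj (ketbra a a) = ketbra a a"
  by (simp add: cadj_def ketbra_def vec_eq_iff)

lemma cadj_Q: "cadj (mat 1 - ketbra a a) = mat 1 - ketbra a a"
  by (simp add: cadj_def ketbra_def vec_eq_iff mat_def)

lemma braket_add: "braket x (y + z) = braket x y + braket x z"
  by (simp add: braket_def distrib_left sum.distrib)

lemma braket_smult_l: "braket (c *s x) y = cnj c * braket x y"
  by (simp add: braket_def sum_distrib_left mult_ac)

lemma braket_smult_r: "braket x (c *s y) = c * braket x y"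
  by (simp add: braket_def sum_distrib_left mult_ac)

lemma braket_sum: "braket x (sum f S) = (\<Sum>k\<in>S. braket x (f k))"
  by (induction S rule: infinite_finite_induct) (auto simp: braket_def distrib_left sum.distrib)

lemma mv_sum: "(sum A S) *v v = (\<Sum>k\<in>S. A k *v v)"
  by (induction S rule: infinite_finite_induct) (auto simp: matrix_vector_mult_add_rdistrib)

lemma braket_self: "braket x x = complex_of_real ((norm x)\<^sup>2)"
proof -
  have "braket x x = (\<Sum>i\<in>UNIV. complex_of_real ((norm (x $ i))\<^sup>2))"
    unfolding braket_def by (rule sum.cong) (simp_all only: of_real_power complex_norm_square[symmetric] mult.commute)
  also have "\<dots> = complex_of_real ((norm x)\<^sup>2)"
    by (simp add: norm_vec_def L2_set_def sum_nonneg flip: of_real_power of_real_sum)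
  finally show ?thesis .
qed

lemma psd_ketbra: "psd (ketbra a a)"
  unfolding psd_def ketbra_mv braket_smult_r
proof
  fix v
  have "braket v a = cnj (braket a v)" by (simp add: braket_def mult.commute)
  then show "0 \<le> Re (braket a v * braket v a)"
    by (simp add: complex_mult_cnj)
qed

lemma mv_smult: "(A::complex^'n^'m) *v (c *s x) = c *s (A *v x)"
  unfolding vec_eq_iff matrix_vector_mult_def
  by (auto simp: sum_distrib_left intro!: sum.cong)

lemma sandwich_mv: "(K ** X ** cadj K) *v v = K *v (X *v (cadj K *v v))"
  by (simp add: matrix_vector_mul_assoc matrix_mul_assoc)

lemma psd_sandwich: "psd X \<Longrightarrow> psd (K ** X ** cadj K)"
  unfolding psd_def sandwich_mv
  by (metis braket_adj)

lemma psd_add: "psd A \<Longrightarrow> psd B \<Longrightarrow> psd (A + B)"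
  unfolding psd_def by (simp add: matrix_vector_mult_add_rdistrib braket_add add_nonneg_nonneg)

lemma psd_qop: "quantum_operation E \<Longrightarrow> psd X \<Longrightarrow> psd (E X)"
  unfolding quantum_operation_def
proof (elim exE conjE)
  fix K :: "nat \<Rightarrow> 'a cmat" and m
  assume h: "\<forall>\<rho>. E \<rho> = (\<Sum>k<m. K k ** \<rho> ** cadj (K k))" and X: "psd X"
  have "\<And>k. psd (K k ** X ** cadj (K k))" using psd_sandwich[OF X] .
  then show "psd (E X)" unfolding psd_def h[rule_format] mv_sum braket_sum Re_sum
    by (simp add: sum_nonneg)
qed

lemma proj_step:
  assumes "psd \<rho>" "quantum_operation E"
  shows "psd (proj_meas_op \<psi> E \<rho>)"
    and "Re (braket \<phi> (proj_meas_op \<psi> E \<rho> *v \<phi>)) \<ge> (cmod (braket \<psi> \<phi>))\<^sup>2 * Re (braket \<psi> (\<rho> *v \<psi>))"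
proof -
  let ?P = "ketbra \<psi> \<psi>" let ?Q = "mat 1 - ketbra \<psi> \<psi>"
  have e: "proj_meas_op \<psi> E \<rho> = ?P ** \<rho> ** cadj ?P + E (?Q ** \<rho> ** cadj ?Q)"
    by (simp only: proj_meas_op_def cadj_ketbra cadj_Q Let_def)
  have pE: "psd (E (?Q ** \<rho> ** cadj ?Q))" by (rule psd_qop[OF assms(2) psd_sandwich[OF assms(1)]])
  show "psd (proj_meas_op \<psi> E \<rho>)" unfolding e by (rule psd_add[OF psd_sandwich[OF assms(1)] pE])
  have g: "Re (braket \<phi> (proj_meas_op \<psi> E \<rho> *v \<phi>)) \<ge> Re (braket \<phi> ((?P ** \<rho> ** cadj ?P) *v \<phi>))"
  proof -
    have "0 \<le> Re (braket \<phi> (E (?Q ** \<rho> ** cadj ?Q) *v \<phi>))" using pE unfolding psd_def by blast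
    then show ?thesis unfolding e matrix_vector_mult_add_rdistrib braket_add plus_complex.sel by linarith
  qed
  have e1: "braket \<phi> ((?P ** \<rho> ** cadj ?P) *v \<phi>) = braket (?P *v \<phi>) (\<rho> *v (?P *v \<phi>))"
  proof -
    have "(?P ** \<rho> ** cadj ?P) *v \<phi> = ?P *v (\<rho> *v (?P *v \<phi>))"
      using sandwich_mv[of ?P \<rho> \<phi>] by (simp only: cadj_ketbra)
    then show ?thesis by (simp only: braket_adj[of \<phi> ?P "\<rho> *v (?P *v \<phi>)"] cadj_ketbra)
  qed
  have e2: "?P *v \<phi> = braket \<psi> \<phi> *s \<psi>" by (rule ketbra_mv)
  have e3: "braket (braket \<psi> \<phi> *s \<psi>) (\<rho> *v (braket \<psi> \<phi> *s \<psi>)) = (cnj (braket \<psi> \<phi>) * braket \<psi> \<phi>) * braket \<psi> (\<rho> *v \<psi>)"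
    by (simp only: mv_smult braket_smult_l braket_smult_r mult.assoc) (rule mult.left_commute)
  have e4: "Re ((cnj z * z) * w) = (cmod z)\<^sup>2 * Re w" for z w
  proof -
    have "cnj z * z = complex_of_real ((cmod z)\<^sup>2)"
      by (simp only: mult.commute[of "cnj z"]) (rule complex_norm_square[symmetric])
    then show ?thesis by simp
  qed
  have "Re (braket \<phi> ((?P ** \<rho> ** cadj ?P) *v \<phi>)) = (cmod (braket \<psi> \<phi>))\<^sup>2 * Re (braket \<psi> (\<rho> *v \<psi>))"
    unfolding e1 e2 e3 by (rule e4)
  with g show "Re (braket \<phi> (proj_meas_op \<psi> E \<rho> *v \<phi>)) \<ge> (cmod (braket \<psi> \<phi>))\<^sup>2 * Re (braket \<psi> (\<rho> *v \<psi>))"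
    by linarith
qed


lemma braket_swap: "braket \<phi> a = cnj (braket a \<phi>)" by (simp add: braket_def mult.commute)

lemma ketbra_mv2: "braket \<phi> (ketbra a a *v \<phi>) = braket a \<phi> * braket \<phi> a"
  by (simp only: ketbra_mv braket_smult_r)

lemma Re_mult_cnj: "Re (z * cnj z) = (cmod z)\<^sup>2"
  by (simp only: complex_mult_cnj cmod_power2 Re_complex_of_real)

lemma ketbra_quad: "Re (braket \<phi> (ketbra a a *v \<phi>)) = (cmod (braket a \<phi>))\<^sup>2"
  by (simp only: ketbra_mv2 braket_swap[of \<phi> a] Re_mult_cnj)

theorem lemma1:
  fixes \<psi> :: "real \<Rightarrow> complex^'n::finite"
    and L' d p :: real
  assumes "L' > 0"
    and "continuous_on {0..L'} \<psi>"
    and "\<forall>l\<in>{0..L'}. norm (\<psi> l) = 1"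
    and "d \<ge> 0"
    and "\<forall>l \<delta>. l \<in> {0..L'} \<and> l + \<delta> \<in> {0..L'} \<longrightarrow>
            (cmod (braket (\<psi> l) (\<psi> (l + \<delta>))))\<^sup>2 \<ge> 1 - d\<^sup>2 * \<delta>\<^sup>2"
    and "0 < p" and "p < 1"
  shows "let q = nat \<lceil>L'\<^sup>2 * d\<^sup>2 / (1 - p)\<rceil> in
    \<exists>l :: nat \<Rightarrow> real.
      (q > 0 \<longrightarrow> 0 < l 1 \<and> l q = L') \<and>
      (\<forall>j. 1 \<le> j \<and> j < q \<longrightarrow> l j < l (Suc j)) \<and>
      (\<forall>Es :: nat \<Rightarrow> ('n cmat \<Rightarrow> 'n cmat).
         (\<forall>j\<in>{1..q}. quantum_operation (Es j)) \<longrightarrow>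
         Re (braket (\<psi> L') (meas_seq \<psi> l Es q *v \<psi> L')) \<ge> p)"
proof -
  define q where "q = nat \<lceil>L'\<^sup>2 * d\<^sup>2 / (1 - p)\<rceil>"
  have qge: "L'\<^sup>2 * d\<^sup>2 / (1 - p) \<le> real q" unfolding q_def by (rule real_nat_ceiling_ge)
  have hyp: "\<And>l \<delta>. l \<in> {0..L'} \<Longrightarrow> l + \<delta> \<in> {0..L'} \<Longrightarrow>
      (cmod (braket (\<psi> l) (\<psi> (l + \<delta>))))\<^sup>2 \<ge> 1 - d\<^sup>2 * \<delta>\<^sup>2" using assms(5) by blast
  have nL: "(cmod (braket (\<psi> L') (\<psi> L')))\<^sup>2 = 1"
    using assms(3) assms(1) by (simp add: braket_self)
  show ?thesis
  proof (cases "q = 0")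
    case True
    then have "L'\<^sup>2 * d\<^sup>2 / (1 - p) \<le> 0" using qge by simp
    moreover have "L'\<^sup>2 * d\<^sup>2 / (1 - p) \<ge> 0" using assms(7) by simp
    ultimately have z: "L'\<^sup>2 * d\<^sup>2 / (1 - p) = 0" by linarith
    have "L'\<^sup>2 * d\<^sup>2 = 0" using z assms(7) by simp
    then have d0: "d = 0" using assms(1) by simp
    have "(cmod (braket (\<psi> 0) (\<psi> (0 + L'))))\<^sup>2 \<ge> 1 - d\<^sup>2 * L'\<^sup>2"
      by (rule hyp) (use assms(1) in auto)
    then have "(cmod (braket (\<psi> 0) (\<psi> L')))\<^sup>2 \<ge> 1" using d0 by simp
    then show ?thesis unfolding Let_def q_def[symmetric] using True assms(7)
      by (intro exI[of _ "\<lambda>_. 0"]) (simp add: ketbra_quad)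
  next
    case False
    then have qpos: "real q > 0" by simp
    define \<delta> where "\<delta> = L' / real q"
    define a where "a = 1 - d\<^sup>2 * \<delta>\<^sup>2"
    define l where "l = (\<lambda>j::nat. real j * \<delta>)"
    have dpos: "\<delta> > 0" unfolding \<delta>_def using qpos assms(1) by simp
    have key: "d\<^sup>2 * \<delta>\<^sup>2 * real q \<le> 1 - p"
    proof -
      have "d\<^sup>2 * \<delta>\<^sup>2 * real q = L'\<^sup>2 * d\<^sup>2 / real q"
        unfolding \<delta>_def using qpos by (simp add: power2_eq_square field_simps)
      also have "\<dots> \<le> 1 - p"
        using qge qpos assms(7) by (simp add: divide_le_eq pos_divide_le_eq mult.commute)
      finally show ?thesis .
    qed
    have a_ge: "a \<ge> 1 - (1 - p) / real q"
      unfolding a_def using key qpos by (simp add: field_simps)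
    have "(1 - p) / real q \<le> 1"
      using qpos assms(6,7) False by (simp add: field_simps)
    then have a0: "a \<ge> 0" using a_ge by linarith
    have lq: "l q = L'" unfolding l_def \<delta>_def using qpos by simp
    have lrange: "\<And>j. j \<le> q \<Longrightarrow> l j \<in> {0..L'}"
    proof -
      fix j assume "j \<le> q"
      then have "real j * \<delta> \<le> real q * \<delta>" using dpos by (intro mult_right_mono) auto
      then show "l j \<in> {0..L'}" using lq dpos unfolding l_def by auto
    qed
    have lstep: "\<And>j. l (Suc j) = l j + \<delta>" unfolding l_def by (simp add: algebra_simps)
    show ?thesis unfolding Let_def q_def[symmetric]
    proof (intro exI[of _ l] conjI allI impI)
      show "0 < l 1" unfolding l_def using dpos by simp
      show "l q = L'" by (rule lq)
      fix j show "l j < l (Suc j)" using lstep dpos by simp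
    next
      fix Es :: "nat \<Rightarrow> ('n cmat \<Rightarrow> 'n cmat)"
      assume Es: "\<forall>j\<in>{1..q}. quantum_operation (Es j)"
      have inv: "j \<le> q \<Longrightarrow> psd (meas_seq \<psi> l Es j) \<and>
          (\<forall>\<phi>. Re (braket \<phi> (meas_seq \<psi> l Es j *v \<phi>)) \<ge> a ^ j * (cmod (braket (\<psi> (l j)) \<phi>))\<^sup>2)"
        for j
      proof (induction j)
        case 0
        then show ?case by (simp add: psd_ketbra ketbra_quad l_def)
      next
        case (Suc j)
        then have IH: "psd (meas_seq \<psi> l Es j)"
          "\<And>\<phi>. Re (braket \<phi> (meas_seq \<psi> l Es j *v \<phi>)) \<ge> a ^ j * (cmod (braket (\<psi> (l j)) \<phi>))\<^sup>2"
          by auto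
        have qo: "quantum_operation (Es (Suc j))" using Es Suc.prems by auto
        have ov: "(cmod (braket (\<psi> (l j)) (\<psi> (l (Suc j)))))\<^sup>2 \<ge> a"
          unfolding a_def lstep by (rule hyp) (use lrange[of j] lrange[of "Suc j"] Suc.prems lstep in auto)
        have "psd (meas_seq \<psi> l Es (Suc j))" using proj_step(1)[OF IH(1) qo] by simp
        moreover have "Re (braket \<phi> (meas_seq \<psi> l Es (Suc j) *v \<phi>)) \<ge>
             a ^ Suc j * (cmod (braket (\<psi> (l (Suc j))) \<phi>))\<^sup>2" for \<phi>
        proof -
          let ?c = "(cmod (braket (\<psi> (l (Suc j))) \<phi>))\<^sup>2"
          have "a ^ Suc j * ?c = ?c * (a ^ j * a)" by (simp add: mult_ac)
          also have "\<dots> \<le> ?c * (a ^ j * (cmod (braket (\<psi> (l j)) (\<psi> (l (Suc j)))))\<^sup>2)"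
            using ov a0 by (intro mult_left_mono) auto
          also have "\<dots> \<le> ?c * Re (braket (\<psi> (l (Suc j))) (meas_seq \<psi> l Es j *v \<psi> (l (Suc j))))"
            using IH(2) by (intro mult_left_mono) auto
          also have "\<dots> \<le> Re (braket \<phi> (meas_seq \<psi> l Es (Suc j) *v \<phi>))"
            using proj_step(2)[OF IH(1) qo] by simp
          finally show ?thesis .
        qed
        ultimately show ?case by blast
      qed
      have "a ^ q \<le> Re (braket (\<psi> L') (meas_seq \<psi> l Es q *v \<psi> L'))"
      proof -
        have "a ^ q * (cmod (braket (\<psi> (l q)) (\<psi> L')))\<^sup>2 \<le> Re (braket (\<psi> L') (meas_seq \<psi> l Es q *v \<psi> L'))"
          using inv[of q] by blast
        then show ?thesis using lq nL by simp
      qed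
      moreover have "p \<le> a ^ q"
      proof -
        have "1 + real q * (- (d\<^sup>2 * \<delta>\<^sup>2)) \<le> (1 + - (d\<^sup>2 * \<delta>\<^sup>2)) ^ q"
          by (rule Bernoulli_inequality) (use a0 a_def in simp)
        then show ?thesis using key unfolding a_def by (simp add: mult_ac)
      qed
      ultimately show "p \<le> Re (braket (\<psi> L') (meas_seq \<psi> l Es q *v \<psi> L'))" by simp
    qed
  qed
qed

end
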